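(* Let $p$ be an odd prime and $K$ a field of characteristic $p$. Let $M$ be either the cyclic group $\mathbb{Z}/p^2\mathbb{Z}$ or the group $M_{p^3}$. Then the smallest integer $n$ such that $M$ embeds (as a group) into $\mathrm{U}_n(K)$ is $n=p+1$.
   Context: $M_{p^3}=\langle x,y\mid x^{p^2}=y^p=1,\ yxy^{-1}=x^{1+p}\rangle$ is the extra-special group of order $p^3$ and exponent $p^2$. $\mathrm{U}_n(K)$ is the group of upper-triangular unipotent $n\times n$ matrices over $K$. *)

theory Defs
  imports "HOL-Algebra.Algebra"
begin

definition unitri_group :: "nat \<Rightarrow> (nat \<Rightarrow> nat \<Rightarrow> 'a::field) monoid" where
  "unitri_group n =
     \<lparr> carrier = {A. (\<forall>i j. (n \<le> i \<or> n \<le> j) \<longrightarrow> A i j = 0)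
                  \<and> (\<forall>i<n. A i i = 1)
                  \<and> (\<forall>i<n. \<forall>j<i. A i j = 0)},
       monoid.mult = (\<lambda>A B i j. if i < n \<and> j < n then (\<Sum>k<n. A i k * B k j) else 0),
       one = (\<lambda>i j. if i < n \<and> i = j then 1 else 0) \<rparr>"

text \<open>The extra-special group M_{p^3} = < x, y | x^(p^2) = y^p = 1, y x y^-1 = x^(1+p) >,
  realised concretely: the pair (a, b) with 0 <= a < p^2, 0 <= b < p stands for x^a y^b.
  Since y^b x^c = x^(c (1+p)^b) y^b, the product is
  (a,b)(c,d) = (a + c (1+p)^b mod p^2, b + d mod p).\<close>
definition Mp3 :: "nat \<Rightarrow> (nat \<times> nat) monoid" where
  "Mp3 p =
     \<lparr> carrier = {0..<p^2} \<times> {0..<p},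
       monoid.mult = (\<lambda>(a, b) (c, d). ((a + c * (1 + p) ^ b) mod p^2, (b + d) mod p)),
       one = (0, 0) \<rparr>"

definition group_embeds :: "('a, 'c) monoid_scheme \<Rightarrow> ('b, 'd) monoid_scheme \<Rightarrow> bool" where
  "group_embeds G H \<longleftrightarrow> (\<exists>h. h \<in> hom G H \<and> inj_on h (carrier G))"

end

theory Submission
  imports Defs "Jordan_Normal_Form.Matrix" "HOL-Computational_Algebra.Primes" "Jordan_Normal_Form.Jordan_Normal_Form"
begin


definition toM :: "nat \<Rightarrow> (nat \<Rightarrow> nat \<Rightarrow> 'a::field) \<Rightarrow> 'a mat" where
  "toM n A = mat n n (\<lambda>(i,j). A i j)"
definition fromM :: "nat \<Rightarrow> 'a::field mat \<Rightarrow> (nat \<Rightarrow> nat \<Rightarrow> 'a)" where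
  "fromM n B = (\<lambda>i j. if i < n \<and> j < n then B $$ (i,j) else 0)"

lemma toM_carrier[simp]: "toM n A \<in> carrier_mat n n" by (simp add: toM_def)
lemma toM_index[simp]: "i<n \<Longrightarrow> j<n \<Longrightarrow> toM n A $$ (i,j) = A i j" by (simp add: toM_def)
lemma toM_fromM: "B \<in> carrier_mat n n \<Longrightarrow> toM n (fromM n B) = B"
  by (auto simp: toM_def fromM_def intro!: eq_matI)
lemma fromM_toM: "A \<in> carrier (unitri_group n) \<Longrightarrow> fromM n (toM n A) = A"
  unfolding fromM_def by (auto simp: unitri_group_def intro!: ext)
lemma toM_dim[simp]: "dim_row (toM n A) = n" "dim_col (toM n A) = n" by (simp_all add: toM_def)
lemma toM_mult_index: "i<n \<Longrightarrow> j<n \<Longrightarrow> (toM n A * toM n B) $$ (i,j) = (\<Sum>k<n. A i k * B k j)"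
  unfolding toM_def by (simp add: scalar_prod_def atLeast0LessThan)
lemma unitri_mult: "A \<otimes>\<^bsub>unitri_group n\<^esub> B = fromM n (toM n A * toM n B)"
  unfolding unitri_group_def fromM_def
  by (auto intro!: ext simp del: index_mult_mat simp: toM_mult_index)
lemma unitri_one: "\<one>\<^bsub>unitri_group n\<^esub> = fromM n (1\<^sub>m n)"
  unfolding unitri_group_def fromM_def by (auto intro!: ext)
lemma fromM_carrier:
  assumes "\<forall>i<n. B $$ (i,i) = 1" "\<forall>i<n. \<forall>j<i. B $$ (i,j) = 0"
  shows "fromM n B \<in> carrier (unitri_group n)"
  using assms unfolding unitri_group_def fromM_def by auto
lemma unitri_diag: "A \<in> carrier (unitri_group n) \<Longrightarrow> i<n \<Longrightarrow> toM n A $$ (i,i) = 1"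
  by (simp add: unitri_group_def)
lemma unitri_lower: "A \<in> carrier (unitri_group n) \<Longrightarrow> i<n \<Longrightarrow> j < i \<Longrightarrow> toM n A $$ (i,j) = 0"
  by (simp add: unitri_group_def)

lemma pascal_sum:
  fixes g :: "nat \<Rightarrow> 'a::comm_semiring_1"
  shows "(\<Sum>k\<le>m. of_nat (m choose k) * (g k + g (Suc k))) = (\<Sum>k\<le>Suc m. of_nat (Suc m choose k) * g k)"
proof -
  have a: "(\<Sum>k\<le>Suc m. of_nat (Suc m choose k) * g k)
     = g 0 + ((\<Sum>k\<le>m. of_nat (m choose k) * g (Suc k)) + (\<Sum>k\<le>m. of_nat (m choose Suc k) * g (Suc k)))"
    by (subst sum.atMost_Suc_shift) (simp add: distrib_right sum.distrib del: sum.atMost_Suc)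
  have b: "(\<Sum>k\<le>m. of_nat (m choose k) * g k) = g 0 + (\<Sum>k<m. of_nat (m choose Suc k) * g (Suc k))"
    unfolding lessThan_Suc_atMost[symmetric] sum.lessThan_Suc_shift by simp
  have c: "(\<Sum>k\<le>m. of_nat (m choose Suc k) * g (Suc k)) = (\<Sum>k<m. of_nat (m choose Suc k) * g (Suc k))"
    unfolding lessThan_Suc_atMost[symmetric] by (simp add: binomial_eq_0)
  show ?thesis unfolding a by (simp add: distrib_left sum.distrib b c add_ac)
qed

lemma binom_expand:
  fixes D :: "'a::comm_ring_1 mat"
  assumes D: "D \<in> carrier_mat n n"
  shows "i < n \<Longrightarrow> j < n \<Longrightarrow> ((1\<^sub>m n + D) ^\<^sub>m m) $$ (i,j) = (\<Sum>k\<le>m. of_nat (m choose k) * (D ^\<^sub>m k) $$ (i,j))"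
proof (induction m arbitrary: i j)
  case 0
  then show ?case using D by simp
next
  case (Suc m)
  let ?M = "1\<^sub>m n + D"
  have M: "?M \<in> carrier_mat n n" using D by simp
  have Mm: "?M ^\<^sub>m m \<in> carrier_mat n n" using M by simp
  have "?M ^\<^sub>m Suc m = ?M ^\<^sub>m m * 1\<^sub>m n + ?M ^\<^sub>m m * D"
    using mult_add_distrib_mat[OF Mm _ D, of "1\<^sub>m n"] by simp
  also have "\<dots> = ?M ^\<^sub>m m + ?M ^\<^sub>m m * D" using right_mult_one_mat[OF Mm] by simp
  finally have e: "?M ^\<^sub>m Suc m = ?M ^\<^sub>m m + ?M ^\<^sub>m m * D" .
  have "(?M ^\<^sub>m m * D) $$ (i,j) = (\<Sum>l\<in>{0..<n}. (?M ^\<^sub>m m) $$ (i,l) * D $$ (l,j))"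
    using Suc.prems Mm D by (simp add: scalar_prod_def)
  also have "\<dots> = (\<Sum>l\<in>{0..<n}. (\<Sum>k\<le>m. of_nat (m choose k) * (D ^\<^sub>m k) $$ (i,l)) * D $$ (l,j))"
    using Suc.IH Suc.prems by simp
  also have "\<dots> = (\<Sum>k\<le>m. of_nat (m choose k) * (\<Sum>l\<in>{0..<n}. (D ^\<^sub>m k) $$ (i,l) * D $$ (l,j)))"
    by (simp add: sum_distrib_right sum_distrib_left mult.assoc sum.swap[of _ "{0..<n}"])
  also have "\<dots> = (\<Sum>k\<le>m. of_nat (m choose k) * (D ^\<^sub>m Suc k) $$ (i,j))"
    using Suc.prems D by (simp add: scalar_prod_def)
  finally have f: "(?M ^\<^sub>m m * D) $$ (i,j) = (\<Sum>k\<le>m. of_nat (m choose k) * (D ^\<^sub>m Suc k) $$ (i,j))" .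
  have "(?M ^\<^sub>m Suc m) $$ (i,j) = (?M ^\<^sub>m m) $$ (i,j) + (?M ^\<^sub>m m * D) $$ (i,j)"
    unfolding e using Suc.prems Mm D by simp
  also have "\<dots> = (\<Sum>k\<le>m. of_nat (m choose k) * ((D ^\<^sub>m k) $$ (i,j) + (D ^\<^sub>m Suc k) $$ (i,j)))"
    unfolding f Suc.IH[OF Suc.prems] by (simp add: distrib_left sum.distrib)
  also have "\<dots> = (\<Sum>k\<le>Suc m. of_nat (Suc m choose k) * (D ^\<^sub>m k) $$ (i,j))"
    by (rule pascal_sum)
  finally show ?case .
qed


lemma strict_pow_zero:
  fixes D :: "'a::comm_ring_1 mat"
  assumes D: "D \<in> carrier_mat n n" and S: "\<forall>i j. i<n \<longrightarrow> j<n \<longrightarrow> j \<le> i \<longrightarrow> D $$ (i,j) = 0"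
  shows "i<n \<Longrightarrow> j<n \<Longrightarrow> j < i + k \<Longrightarrow> (D ^\<^sub>m k) $$ (i,j) = 0"
proof (induction k arbitrary: j)
  case 0
  then show ?case using D by simp
next
  case (Suc k)
  have "(D ^\<^sub>m Suc k) $$ (i,j) = (\<Sum>l\<in>{0..<n}. (D ^\<^sub>m k) $$ (i,l) * D $$ (l,j))"
    using Suc.prems D by (simp add: scalar_prod_def)
  also have "\<dots> = 0"
  proof (rule sum.neutral, rule ballI)
    fix l assume l: "l \<in> {0..<n}"
    show "(D ^\<^sub>m k) $$ (i,l) * D $$ (l,j) = 0"
    proof (cases "l < i + k")
      case True then show ?thesis using Suc.IH[of l] Suc.prems l by simp
    next
      case False then show ?thesis using S Suc.prems l by auto
    qed
  qed
  finally show ?case .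
qed

lemma unitri_pow_p:
  fixes A :: "nat \<Rightarrow> nat \<Rightarrow> 'a::field"
  assumes p: "Factorial_Ring.prime p" and ch: "CHAR('a) = p" and np: "n \<le> p"
    and A: "A \<in> carrier (unitri_group n)"
  shows "toM n A ^\<^sub>m p = 1\<^sub>m n"
proof -
  define M where "M = toM n A"
  define D where "D = M - 1\<^sub>m n"
  have Mc: "M \<in> carrier_mat n n" unfolding M_def by simp
  have Dc: "D \<in> carrier_mat n n" unfolding D_def using Mc by (simp add: minus_carrier_mat)
  have MD: "M = 1\<^sub>m n + D"
    by (rule eq_matI, insert Mc, auto simp: D_def)
  have S: "\<forall>i j. i<n \<longrightarrow> j<n \<longrightarrow> j \<le> i \<longrightarrow> D $$ (i,j) = 0"
  proof (intro allI impI)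
    fix i j assume ij: "i<n" "j<n" "j\<le>i"
    show "D $$ (i,j) = 0"
    proof (cases "j = i")
      case True then show ?thesis using ij Mc unitri_diag[OF A] by (simp add: D_def M_def)
    next
      case False then show ?thesis using ij Mc unitri_lower[OF A, of i j] by (simp add: D_def M_def)
    qed
  qed
  have p0: "p > 0" using p prime_gt_0_nat by blast
  show ?thesis
  proof (rule eq_matI)
    fix i j assume i: "i < dim_row (1\<^sub>m n :: 'a mat)" and j: "j < dim_col (1\<^sub>m n :: 'a mat)"
    then have ij: "i < n" "j < n" by auto
    have "(M ^\<^sub>m p) $$ (i,j) = (\<Sum>k\<le>p. of_nat (p choose k) * (D ^\<^sub>m k) $$ (i,j))"
      unfolding MD by (rule binom_expand[OF Dc ij])
    also have "\<dots> = (\<Sum>k\<le>p. if k = 0 then (1\<^sub>m n :: 'a mat) $$ (i,j) else 0)"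
    proof (rule sum.cong[OF refl])
      fix k assume k: "k \<in> {..p}"
      show "of_nat (p choose k) * (D ^\<^sub>m k) $$ (i,j) = (if k = 0 then (1\<^sub>m n :: 'a mat) $$ (i,j) else 0)"
      proof (cases "k = 0")
        case True then show ?thesis using Dc by simp
      next
        case False
        show ?thesis
        proof (cases "k = p")
          case True
          have "(D ^\<^sub>m k) $$ (i,j) = 0"
            using strict_pow_zero[OF Dc S ij] True ij np by simp
          then show ?thesis using False by simp
        next
          case False2: False
          have "p dvd (p choose k)" using dvd_choose_prime[of k p] k False False2 p0 p by auto
          then have "(of_nat (p choose k) :: 'a) = 0" using ch by (simp add: of_nat_eq_0_iff_char_dvd)
          then show ?thesis using False by simp
        qed
      qed
    qed
    also have "\<dots> = (1\<^sub>m n :: 'a mat) $$ (i,j)" by (simp add: sum.delta)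
    finally show "(toM n A ^\<^sub>m p) $$ (i,j) = (1\<^sub>m n :: 'a mat) $$ (i,j)" unfolding M_def .
  qed (insert Mc, auto simp: M_def)
qed

lemma lower_generic:
  fixes h :: "'g \<Rightarrow> (nat \<Rightarrow> nat \<Rightarrow> 'a::field)"
  assumes hom: "h \<in> hom G (unitri_group n)" and inj: "inj_on h (carrier G)"
    and p: "Factorial_Ring.prime p" and ch: "CHAR('a) = p"
    and sc: "\<forall>k. s k \<in> carrier G" and ss: "\<forall>k\<ge>1. s (Suc k) = s k \<otimes>\<^bsub>G\<^esub> s 1"
    and sne: "s (p+1) \<noteq> s 1"
  shows "p + 1 \<le> n"
proof (rule ccontr)
  assume "\<not> p + 1 \<le> n"
  then have np: "n \<le> p" by simp
  have hc: "\<And>x. x \<in> carrier G \<Longrightarrow> h x \<in> carrier (unitri_group n)" using hom by (auto simp: hom_def)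
  have hm: "\<And>x y. x \<in> carrier G \<Longrightarrow> y \<in> carrier G \<Longrightarrow> h (x \<otimes>\<^bsub>G\<^esub> y) = h x \<otimes>\<^bsub>unitri_group n\<^esub> h y"
    using hom by (auto simp: hom_def)
  define T where "T = toM n (h (s 1))"
  have Tc: "T \<in> carrier_mat n n" by (simp add: T_def)
  have key: "k \<ge> 1 \<Longrightarrow> h (s k) = fromM n (T ^\<^sub>m k)" for k
  proof (induction k rule: dec_induct)
    case base
    have "T ^\<^sub>m 1 = T" using Tc by simp
    then show ?case using fromM_toM[OF hc[OF sc[rule_format]]] by (simp add: T_def)
  next
    case (step k)
    have "h (s (Suc k)) = h (s k) \<otimes>\<^bsub>unitri_group n\<^esub> h (s 1)"
      using ss step.hyps hm sc by simp
    also have "\<dots> = fromM n (T ^\<^sub>m k * T)"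
      unfolding unitri_mult step.IH T_def[symmetric] using toM_fromM[of "T ^\<^sub>m k" n] Tc by simp
    finally show ?case by simp
  qed
  have "T ^\<^sub>m (p+1) = T" using unitri_pow_p[OF p ch np hc[OF sc[rule_format]], of 1] Tc
    by (simp add: T_def)
  then have "h (s (p+1)) = h (s 1)" using key[of "p+1"] key[of 1] Tc by simp
  then show False using inj sc sne by (meson inj_onD)
qed



lemma pow_mat_add: assumes A: "(A::'a::semiring_1 mat) \<in> carrier_mat n n"
  shows "A ^\<^sub>m (a + b) = A ^\<^sub>m a * A ^\<^sub>m b"
proof (induction b)
  case 0 then show ?case using A by simp
next
  case (Suc b)
  have "A ^\<^sub>m (a + Suc b) = (A ^\<^sub>m a * A ^\<^sub>m b) * A" using Suc by simp
  also have "\<dots> = A ^\<^sub>m a * (A ^\<^sub>m b * A)" using A by (intro assoc_mult_mat) auto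
  finally show ?case by simp
qed

lemma pow_mat_mult: assumes A: "(A::'a::semiring_1 mat) \<in> carrier_mat n n"
  shows "A ^\<^sub>m (a * b) = (A ^\<^sub>m a) ^\<^sub>m b"
proof (induction b)
  case 0 then show ?case using A by simp
next
  case (Suc b)
  have "A ^\<^sub>m (a * Suc b) = A ^\<^sub>m (a * b + a)" by (simp add: add.commute)
  also have "\<dots> = A ^\<^sub>m (a * b) * A ^\<^sub>m a" by (rule pow_mat_add[OF A])
  finally show ?case using Suc by simp
qed

lemma pow_one_mat: "(1\<^sub>m n :: 'a::semiring_1 mat) ^\<^sub>m k = 1\<^sub>m n"
  by (induction k) auto

lemma pow_mat_mod: assumes A: "(A::'a::semiring_1 mat) \<in> carrier_mat n n" and N: "A ^\<^sub>m N = 1\<^sub>m n"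
  shows "A ^\<^sub>m k = A ^\<^sub>m (k mod N)"
proof -
  have "A ^\<^sub>m k = A ^\<^sub>m (N * (k div N) + k mod N)" by simp
  also have "\<dots> = (A ^\<^sub>m N) ^\<^sub>m (k div N) * A ^\<^sub>m (k mod N)"
    by (simp only: pow_mat_add[OF A] pow_mat_mult[OF A])
  also have "\<dots> = A ^\<^sub>m (k mod N)" unfolding N pow_one_mat using A by simp
  finally show ?thesis .
qed

lemma pow_mat_gcd: assumes A: "(A::'a::semiring_1 mat) \<in> carrier_mat n n"
  shows "A ^\<^sub>m a = 1\<^sub>m n \<Longrightarrow> A ^\<^sub>m b = 1\<^sub>m n \<Longrightarrow> A ^\<^sub>m (gcd a b) = 1\<^sub>m n"
proof (induction a b rule: gcd_nat_induct)
  case (step m k)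
  have "A ^\<^sub>m (m mod k) = 1\<^sub>m n" using pow_mat_mod[OF A step.prems(2), of m] step.prems(1) by simp
  then have "A ^\<^sub>m (gcd k (m mod k)) = 1\<^sub>m n" using step.IH step.prems by simp
  then show ?case by (metis gcd.commute gcd_red_nat)
qed simp



definition Ymat :: "nat \<Rightarrow> nat \<Rightarrow> 'a::field \<Rightarrow> 'a mat" where
  "Ymat n s c = mat n n (\<lambda>(i,j). (if i = j then 1 else 0) + (if i = 0 \<and> j = s then c else 0))"

lemma Ymat_carrier[simp]: "Ymat n s c \<in> carrier_mat n n" by (simp add: Ymat_def)

lemma Ymat_right: assumes A: "A \<in> carrier_mat n n" and s: "s < n" and ij: "i < n" "j < n"
  shows "(A * Ymat n s c) $$ (i,j) = A $$ (i,j) + (if j = s then c * A $$ (i,0) else 0)"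
proof -
  have "(A * Ymat n s c) $$ (i,j) = (\<Sum>l\<in>{0..<n}. A $$ (i,l) * ((if l = j then 1 else 0) + (if l = 0 \<and> j = s then c else 0)))"
    using A ij by (simp add: scalar_prod_def Ymat_def)
  also have "\<dots> = (\<Sum>l\<in>{0..<n}. (if l = j then A $$ (i,l) else 0)) + (\<Sum>l\<in>{0..<n}. (if l = 0 then (if j = s then c * A $$ (i,l) else 0) else 0))"
    unfolding sum.distrib[symmetric] by (rule sum.cong) (auto simp: distrib_left)
  also have "\<dots> = A $$ (i,j) + (if j = s then c * A $$ (i,0) else 0)"
    using ij by (simp add: sum.delta)
  finally show ?thesis .
qed

lemma Ymat_left: assumes A: "A \<in> carrier_mat n n" and s: "s < n" and ij: "i < n" "j < n"
  shows "(Ymat n s c * A) $$ (i,j) = A $$ (i,j) + (if i = 0 then c * A $$ (s,j) else 0)"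
proof -
  have "(Ymat n s c * A) $$ (i,j) = (\<Sum>l\<in>{0..<n}. ((if i = l then 1 else 0) + (if i = 0 \<and> l = s then c else 0)) * A $$ (l,j))"
    using A ij by (simp add: scalar_prod_def Ymat_def)
  also have "\<dots> = (\<Sum>l\<in>{0..<n}. (if l = i then A $$ (l,j) else 0)) + (\<Sum>l\<in>{0..<n}. (if l = s then (if i = 0 then c * A $$ (l,j) else 0) else 0))"
    unfolding sum.distrib[symmetric] by (rule sum.cong) (auto simp: distrib_right)
  also have "\<dots> = A $$ (i,j) + (if i = 0 then c * A $$ (s,j) else 0)"
    using ij s by (simp add: sum.delta)
  finally show ?thesis .
qed

lemma Ymat_index: "i < n \<Longrightarrow> j < n \<Longrightarrow> Ymat n s c $$ (i,j) = (if i = j then 1 else 0) + (if i = 0 \<and> j = s then c else 0)"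
  by (simp add: Ymat_def)

lemma Ymat_pow: assumes s: "s < n" "s \<noteq> 0"
  shows "Ymat n s (1::'a::field) ^\<^sub>m b = Ymat n s (of_nat b)"
proof (induction b)
  case 0 show ?case by (rule eq_matI) (auto simp: Ymat_def)
next
  case (Suc b)
  show ?case
  proof (rule eq_matI)
    fix i j assume "i < dim_row (Ymat n s (of_nat (Suc b) :: 'a))" "j < dim_col (Ymat n s (of_nat (Suc b) :: 'a))"
    then have ij: "i < n" "j < n" by (auto simp: Ymat_def)
    show "(Ymat n s 1 ^\<^sub>m Suc b) $$ (i,j) = Ymat n s (of_nat (Suc b) :: 'a) $$ (i,j)"
      using Ymat_right[where A="Ymat n s (of_nat b)" and c=1, OF Ymat_carrier s(1) ij] ij s Suc
      by (auto simp: Ymat_index)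
  qed (auto simp: Ymat_def)
qed



lemma assoc_sq: "A \<in> carrier_mat n n \<Longrightarrow> B \<in> carrier_mat n n \<Longrightarrow> C \<in> carrier_mat n n \<Longrightarrow> A * B * C = A * (B * C)"
  by (rule assoc_mult_mat)

lemma dvd_choose_p2:
  assumes p: "Factorial_Ring.prime (p::nat)" and d: "0 < d" "d \<le> p"
  shows "p dvd (p^2 choose d)"
proof -
  obtain Z0 where e: "d * (p^2 choose d) = p^2 * Z0"
    using times_binomial_minus1_eq[OF d(1)] by blast
  show ?thesis
  proof (cases "d = p")
    case True
    then have "p * (p^2 choose d) = p * (p * Z0)" using e by (simp add: power2_eq_square mult.assoc)
    moreover have "p \<noteq> 0" using p by auto
    ultimately have "(p^2 choose d) = p * Z0" by (metis mult_left_cancel)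
    then show ?thesis by simp
  next
    case False
    then have "d < p" using d by simp
    then have nd: "\<not> p dvd d" using d(1) by (auto dest: dvd_imp_le)
    have "p dvd d * (p^2 choose d)" unfolding e by (simp add: power2_eq_square)
    then show ?thesis using nd p by (simp add: prime_dvd_mult_iff)
  qed
qed

lemma of_nat_inj_lt:
  assumes ch: "CHAR('a::comm_ring_1) = p" and b: "b < p" and d: "d < p"
    and e: "(of_nat b :: 'a) = of_nat d"
  shows "b = d"
proof -
  { fix x y :: nat assume xy: "x \<le> y" "y < p" "(of_nat x :: 'a) = of_nat y"
    have "(of_nat (y - x) :: 'a) = 0" using xy by (simp add: of_nat_diff)
    then have "p dvd (y - x)" using ch by (simp add: of_nat_eq_0_iff_char_dvd)
    have "y - x = 0"
    proof (rule ccontr)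
      assume "y - x \<noteq> 0"
      then have "p \<le> y - x" using \<open>p dvd (y - x)\<close> by (auto dest: dvd_imp_le)
      then show False using xy by simp
    qed
    then have "x = y" using xy by simp }
  note * = this
  show ?thesis
  proof (cases "b \<le> d")
    case True then show ?thesis using * d e by blast
  next
    case False then show ?thesis using *[of d b] b e by simp
  qed
qed

context
  fixes p :: nat
  assumes pp: "Factorial_Ring.prime p" and podd: "odd p" and ch: "CHAR('a::field) = p"
begin

lemma p3: "p \<ge> 3"
proof -
  have "p \<ge> 2" using pp prime_ge_2_nat by blast
  moreover have "p \<noteq> 2" using podd by auto
  ultimately show ?thesis by simp
qed

lemma ofp: "(of_nat p :: 'a) = 0" using of_nat_CHAR[where 'a='a] ch by simp

lemma ofC_p: "k \<le> p \<Longrightarrow> (of_nat (p choose k) :: 'a) = (if k = 0 \<or> k = p then 1 else 0)"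
proof -
  assume k: "k \<le> p"
  show ?thesis
  proof (cases "k = 0 \<or> k = p")
    case True then show ?thesis by auto
  next
    case False
    then have "p dvd (p choose k)" using dvd_choose_prime[of k p] k pp p3 by auto
    then show ?thesis using False ch by (simp add: of_nat_eq_0_iff_char_dvd)
  qed
qed

lemma ofC_p1: "d \<le> p \<Longrightarrow> (of_nat ((p+1) choose d) :: 'a) = (if d = 0 \<or> d = 1 \<or> d = p then 1 else 0)"
proof (cases d)
  case 0 then show ?thesis by simp
next
  case (Suc e)
  assume d: "d \<le> p"
  have "(p+1) choose d = (p choose e) + (p choose Suc e)" using Suc by simp
  then have "(of_nat ((p+1) choose d) :: 'a) = of_nat (p choose e) + of_nat (p choose Suc e)" by simp
  also have "\<dots> = (if e = 0 \<or> e = p then 1 else 0) + (if Suc e = 0 \<or> Suc e = p then 1 else 0)"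
    using ofC_p[of e] ofC_p[of "Suc e"] d Suc by simp
  finally show ?thesis using Suc d p3 by auto
qed

abbreviation JJ :: "'a mat" where "JJ \<equiv> jordan_block (p+1) (1::'a)"

lemma Jpow_idx: "i < p+1 \<Longrightarrow> j < p+1 \<Longrightarrow> (JJ ^\<^sub>m r) $$ (i,j) = (if i \<le> j then of_nat (r choose (j - i)) else 0)"
  by (simp add: jordan_block_pow)

lemma Jpow_idxS[simp]: "i < Suc p \<Longrightarrow> j < Suc p \<Longrightarrow> (jordan_block (Suc p) (1::'a) ^\<^sub>m r) $$ (i,j) = (if i \<le> j then of_nat (r choose (j - i)) else 0)"
  using Jpow_idx by simp

lemma J_p2: "JJ ^\<^sub>m (p^2) = 1\<^sub>m (p+1)"
proof (rule eq_matI)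
  fix i j assume "i < dim_row (1\<^sub>m (p+1) :: 'a mat)" "j < dim_col (1\<^sub>m (p+1) :: 'a mat)"
  then have ij: "i < p+1" "j < p+1" by auto
  show "(JJ ^\<^sub>m (p^2)) $$ (i,j) = (1\<^sub>m (p+1) :: 'a mat) $$ (i,j)"
  proof (cases "i \<le> j")
    case True
    show ?thesis
    proof (cases "i = j")
      case True then show ?thesis using ij by (simp add: Jpow_idx)
    next
      case False
      have "p dvd (p^2 choose (j - i))" using dvd_choose_p2[OF pp] False True ij by simp
      then have "(of_nat (p^2 choose (j - i)) :: 'a) = 0" using ch by (simp add: of_nat_eq_0_iff_char_dvd)
      then show ?thesis using ij True False by (simp add: Jpow_idx)
    qed
  next
    case False then show ?thesis using ij by (simp add: Jpow_idx)
  qed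
qed auto

lemma J_p_ne: "JJ ^\<^sub>m p \<noteq> 1\<^sub>m (p+1)"
proof
  assume a: "JJ ^\<^sub>m p = 1\<^sub>m (p+1)"
  have "(JJ ^\<^sub>m p) $$ (0,p) = 1" by (simp add: Jpow_idx)
  moreover have "(1\<^sub>m (p+1) :: 'a mat) $$ (0,p) = 0" using p3 by simp
  ultimately show False using a by (metis zero_neq_one)
qed

lemma J_ne: assumes a: "0 < a" "a < p^2" shows "JJ ^\<^sub>m a \<noteq> 1\<^sub>m (p+1)"
proof
  assume e: "JJ ^\<^sub>m a = 1\<^sub>m (p+1)"
  have g1: "JJ ^\<^sub>m (gcd a (p^2)) = 1\<^sub>m (p+1)"
    using pow_mat_gcd[OF jordan_block_carrier e J_p2] .
  have "gcd a (p^2) dvd p^2" by simp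
  then obtain i where i: "i \<le> 2" "gcd a (p^2) = p^i" using divides_primepow_nat[OF pp] by blast
  have "gcd a (p^2) \<le> a" using a by (simp add: gcd_le1_nat)
  then have "i \<noteq> 2" using i a by auto
  then have "gcd a (p^2) dvd p" using i by (cases i) (auto simp: numeral_2_eq_2 le_Suc_eq)
  then obtain k where k: "p = gcd a (p^2) * k" by blast
  have "JJ ^\<^sub>m p = (JJ ^\<^sub>m (gcd a (p^2))) ^\<^sub>m k"
    by (subst k, rule pow_mat_mult[OF jordan_block_carrier])
  also have "\<dots> = 1\<^sub>m (p+1)" unfolding g1 pow_one_mat ..
  finally show False using J_p_ne by simp
qed

lemma J_inj: assumes a: "a < p^2" and c: "c < p^2" and e: "JJ ^\<^sub>m a = JJ ^\<^sub>m c" shows "a = c"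
proof (rule ccontr)
  assume ne: "a \<noteq> c"
  { fix x y assume xy: "x < y" "y < p^2" "JJ ^\<^sub>m x = JJ ^\<^sub>m y"
    have Jc: "JJ \<in> carrier_mat (p+1) (p+1)" by simp
    have "JJ ^\<^sub>m (p^2 - x) * JJ ^\<^sub>m y = JJ ^\<^sub>m (p^2 - x + y)" by (rule pow_mat_add[OF Jc, symmetric])
    also have "p^2 - x + y = p^2 + (y - x)" using xy by simp
    also have "JJ ^\<^sub>m (p^2 + (y - x)) = JJ ^\<^sub>m (y - x)"
      unfolding pow_mat_add[OF Jc] J_p2 by simp
    finally have 1: "JJ ^\<^sub>m (p^2 - x) * JJ ^\<^sub>m y = JJ ^\<^sub>m (y - x)" .
    have "JJ ^\<^sub>m (p^2 - x) * JJ ^\<^sub>m x = JJ ^\<^sub>m (p^2 - x + x)" by (rule pow_mat_add[OF Jc, symmetric])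
    also have "\<dots> = 1\<^sub>m (p+1)" using xy J_p2 by simp
    finally have "JJ ^\<^sub>m (y - x) = 1\<^sub>m (p+1)" using 1 xy by simp
    moreover have "y - x < p^2" "0 < y - x" using xy by linarith+
    ultimately have False using J_ne[of "y - x"] by blast }
  then show False using a c e ne by (metis linorder_neqE_nat)
qed


abbreviation YY :: "'a mat" where "YY \<equiv> Ymat (p+1) (p-1) (1::'a)"

lemma s_ok: "p - 1 < p + 1" "p - 1 \<noteq> 0" using p3 by auto

lemma Jc: "JJ \<in> carrier_mat (p+1) (p+1)" by simp
lemma Jpc: "JJ ^\<^sub>m k \<in> carrier_mat (p+1) (p+1)" by simp
lemma Yc: "YY \<in> carrier_mat (p+1) (p+1)" by simp
lemma Ypc: "YY ^\<^sub>m k \<in> carrier_mat (p+1) (p+1)" by simp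

lemma Y_pow: "YY ^\<^sub>m b = Ymat (p+1) (p-1) (of_nat b)"
  by (rule Ymat_pow[OF s_ok])

lemma Y_p: "YY ^\<^sub>m p = 1\<^sub>m (p+1)"
  unfolding Y_pow ofp by (rule eq_matI) (auto simp: Ymat_index Ymat_def)

lemma YJ: "YY * JJ = JJ ^\<^sub>m (p+1) * YY"
proof (rule eq_matI)
  fix i j assume "i < dim_row (JJ ^\<^sub>m (p+1) * YY)" "j < dim_col (JJ ^\<^sub>m (p+1) * YY)"
  then have ij: "i < p+1" "j < p+1" by (auto simp: Ymat_def)
  have L: "(YY * JJ) $$ (i,j) = JJ $$ (i,j) + (if i = 0 then 1 * JJ $$ (p-1,j) else 0)"
    by (rule Ymat_left[OF Jc s_ok(1) ij])
  have R: "(JJ ^\<^sub>m (p+1) * YY) $$ (i,j) = (JJ ^\<^sub>m (p+1)) $$ (i,j) + (if j = p-1 then 1 * (JJ ^\<^sub>m (p+1)) $$ (i,0) else 0)"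
    by (rule Ymat_right[OF Jpc s_ok(1) ij])
  have C: "(JJ ^\<^sub>m (p+1)) $$ (i,j) = (if i \<le> j then (if j - i = 0 \<or> j - i = 1 \<or> j - i = p then 1 else 0) else 0)"
    using Jpow_idx[OF ij, of "p+1"] ofC_p1[of "j - i"] ij by auto
  have C0: "(JJ ^\<^sub>m (p+1)) $$ (i,0) = (if i = 0 then 1 else 0)"
    using Jpow_idx[OF ij(1), of 0 "p+1"] by auto
  have J1: "JJ $$ (i,j) = (if i = j then 1 else if Suc i = j then 1 else 0)" using ij by simp
  have J2: "JJ $$ (p-1,j) = (if p - 1 = j then 1 else if Suc (p-1) = j then 1 else 0)" using ij p3 by simp
  show "(YY * JJ) $$ (i,j) = (JJ ^\<^sub>m (p+1) * YY) $$ (i,j)"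
    unfolding L R C C0 J1 J2 using ij p3 by auto
qed (auto simp: Ymat_def)

lemma YJc: "YY * JJ ^\<^sub>m c = JJ ^\<^sub>m (c * (p+1)) * YY"
proof (induction c)
  case 0
  show ?case using right_mult_one_mat[OF Yc] left_mult_one_mat[OF Yc] by simp
next
  case (Suc c)
  have "YY * JJ ^\<^sub>m Suc c = YY * (JJ ^\<^sub>m c * JJ)" by simp
  also have "\<dots> = (YY * JJ ^\<^sub>m c) * JJ" by (rule assoc_sq[OF Yc Jpc Jc, symmetric])
  also have "\<dots> = (JJ ^\<^sub>m (c * (p+1)) * YY) * JJ" unfolding Suc ..
  also have "\<dots> = JJ ^\<^sub>m (c * (p+1)) * (YY * JJ)" by (rule assoc_sq[OF Jpc Yc Jc])
  also have "\<dots> = JJ ^\<^sub>m (c * (p+1)) * (JJ ^\<^sub>m (p+1) * YY)" unfolding YJ ..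
  also have "\<dots> = (JJ ^\<^sub>m (c * (p+1)) * JJ ^\<^sub>m (p+1)) * YY" by (rule assoc_sq[OF Jpc Jpc Yc, symmetric])
  also have "\<dots> = JJ ^\<^sub>m (c * (p+1) + (p+1)) * YY" unfolding pow_mat_add[OF Jc] ..
  also have "c * (p+1) + (p+1) = Suc c * (p+1)" by simp
  finally show ?case .
qed

lemma YbJc: "YY ^\<^sub>m b * JJ ^\<^sub>m c = JJ ^\<^sub>m (c * (p+1)^b) * YY ^\<^sub>m b"
proof (induction b arbitrary: c)
  case 0
  have "1\<^sub>m (p+1) * JJ ^\<^sub>m c = JJ ^\<^sub>m c" "JJ ^\<^sub>m c * 1\<^sub>m (p+1) = JJ ^\<^sub>m c" using Jpc by simp_all
  then show ?case by (simp add: Ymat_def)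
next
  case (Suc b)
  have "YY ^\<^sub>m Suc b * JJ ^\<^sub>m c = (YY ^\<^sub>m b * YY) * JJ ^\<^sub>m c" by simp
  also have "\<dots> = YY ^\<^sub>m b * (YY * JJ ^\<^sub>m c)" by (rule assoc_sq[OF Ypc Yc Jpc])
  also have "\<dots> = YY ^\<^sub>m b * (JJ ^\<^sub>m (c * (p+1)) * YY)" unfolding YJc ..
  also have "\<dots> = (YY ^\<^sub>m b * JJ ^\<^sub>m (c * (p+1))) * YY" by (rule assoc_sq[OF Ypc Jpc Yc, symmetric])
  also have "\<dots> = (JJ ^\<^sub>m (c * (p+1) * (p+1)^b) * YY ^\<^sub>m b) * YY" unfolding Suc.IH[of "c * (p+1)"] ..
  also have "\<dots> = JJ ^\<^sub>m (c * (p+1) * (p+1)^b) * (YY ^\<^sub>m b * YY)" by (rule assoc_sq[OF Jpc Ypc Yc])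
  also have "c * (p+1) * (p+1)^b = c * (p+1)^Suc b" by (simp only: power_Suc mult_ac)
  finally show ?case by simp
qed


lemma JYc: "JJ ^\<^sub>m a * YY ^\<^sub>m b \<in> carrier_mat (p+1) (p+1)"
  by (rule mult_carrier_mat[OF Jpc Ypc])
lemma YYc: "YY ^\<^sub>m a * YY ^\<^sub>m b \<in> carrier_mat (p+1) (p+1)"
  by (rule mult_carrier_mat[OF Ypc Ypc])

lemma prodform: "(JJ ^\<^sub>m a * YY ^\<^sub>m b) * (JJ ^\<^sub>m c * YY ^\<^sub>m d)
   = JJ ^\<^sub>m ((a + c * (1+p)^b) mod p^2) * YY ^\<^sub>m ((b + d) mod p)"
proof -
  have "(JJ ^\<^sub>m a * YY ^\<^sub>m b) * (JJ ^\<^sub>m c * YY ^\<^sub>m d) = JJ ^\<^sub>m a * (YY ^\<^sub>m b * (JJ ^\<^sub>m c * YY ^\<^sub>m d))"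
    by (rule assoc_sq[OF Jpc Ypc JYc])
  also have "YY ^\<^sub>m b * (JJ ^\<^sub>m c * YY ^\<^sub>m d) = (YY ^\<^sub>m b * JJ ^\<^sub>m c) * YY ^\<^sub>m d"
    by (rule assoc_sq[OF Ypc Jpc Ypc, symmetric])
  also have "\<dots> = (JJ ^\<^sub>m (c * (p+1)^b) * YY ^\<^sub>m b) * YY ^\<^sub>m d" unfolding YbJc ..
  also have "\<dots> = JJ ^\<^sub>m (c * (p+1)^b) * (YY ^\<^sub>m b * YY ^\<^sub>m d)" by (rule assoc_sq[OF Jpc Ypc Ypc])
  also have "JJ ^\<^sub>m a * (JJ ^\<^sub>m (c * (p+1)^b) * (YY ^\<^sub>m b * YY ^\<^sub>m d))
      = (JJ ^\<^sub>m a * JJ ^\<^sub>m (c * (p+1)^b)) * (YY ^\<^sub>m b * YY ^\<^sub>m d)" by (rule assoc_sq[OF Jpc Jpc YYc, symmetric])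
  also have "\<dots> = JJ ^\<^sub>m (a + c * (p+1)^b) * YY ^\<^sub>m (b + d)"
    unfolding pow_mat_add[OF Jc] pow_mat_add[OF Yc] ..
  also have "\<dots> = JJ ^\<^sub>m ((a + c * (1+p)^b) mod p^2) * YY ^\<^sub>m ((b + d) mod p)"
    using pow_mat_mod[OF Jc J_p2, of "a + c * (p+1)^b"] pow_mat_mod[OF Yc Y_p, of "b + d"] by (simp add: add.commute)
  finally show ?thesis .
qed

lemma JY_idx: assumes ij: "i < p+1" "j < p+1"
  shows "(JJ ^\<^sub>m a * YY ^\<^sub>m b) $$ (i,j) = (if i \<le> j then of_nat (a choose (j - i)) else 0) + (if i = 0 \<and> j = p - 1 then of_nat b else 0)"
proof -
  have "(JJ ^\<^sub>m a * YY ^\<^sub>m b) $$ (i,j) = (JJ ^\<^sub>m a) $$ (i,j) + (if j = p - 1 then of_nat b * (JJ ^\<^sub>m a) $$ (i,0) else 0)"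
    unfolding Y_pow by (rule Ymat_right[OF Jpc s_ok(1) ij])
  then show ?thesis using Jpow_idx[OF ij, of a] Jpow_idx[OF ij(1), of 0 a] by auto
qed

lemma JY_carrier: "fromM (p+1) (JJ ^\<^sub>m a * YY ^\<^sub>m b) \<in> carrier (unitri_group (p+1))"
proof (rule fromM_carrier)
  show "\<forall>i<p+1. (JJ ^\<^sub>m a * YY ^\<^sub>m b) $$ (i,i) = 1"
  proof (intro allI impI)
    fix i assume i: "i < p+1"
    show "(JJ ^\<^sub>m a * YY ^\<^sub>m b) $$ (i,i) = 1" unfolding JY_idx[OF i i] using p3 by auto
  qed
  show "\<forall>i<p+1. \<forall>j<i. (JJ ^\<^sub>m a * YY ^\<^sub>m b) $$ (i,j) = 0"
  proof (intro allI impI)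
    fix i j assume i: "i < p+1" and j: "j < i"
    then have j': "j < p+1" by simp
    show "(JJ ^\<^sub>m a * YY ^\<^sub>m b) $$ (i,j) = 0" unfolding JY_idx[OF i j'] using j by auto
  qed
qed

lemma J_carrier: "fromM (p+1) (JJ ^\<^sub>m a) \<in> carrier (unitri_group (p+1))"
  by (rule fromM_carrier) (auto simp: Jpow_idx)

lemma embZ: "group_embeds (integer_mod_group (p^2)) (unitri_group (p+1) :: (nat \<Rightarrow> nat \<Rightarrow> 'a) monoid)"
proof -
  have p0: "p^2 \<noteq> 0" using p3 by simp
  have carG: "carrier (integer_mod_group (p^2)) = {0..<int (p^2)}" using p0 by (simp add: carrier_integer_mod_group)
  have mulG: "\<And>x y. x \<otimes>\<^bsub>integer_mod_group (p^2)\<^esub> y = (x+y) mod int (p^2)" using p0 by (simp add: integer_mod_group_def)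
  let ?h = "\<lambda>x::int. fromM (p+1) (JJ ^\<^sub>m nat x)"
  show ?thesis unfolding group_embeds_def
  proof (intro exI conjI)
    show "?h \<in> hom (integer_mod_group (p^2)) (unitri_group (p+1))"
    proof (rule homI)
      fix x assume "x \<in> carrier (integer_mod_group (p^2))"
      show "?h x \<in> carrier (unitri_group (p+1))" by (rule J_carrier)
    next
      fix x y assume x: "x \<in> carrier (integer_mod_group (p^2))" and y: "y \<in> carrier (integer_mod_group (p^2))"
      then have xy: "0 \<le> x" "0 \<le> y" using carG by auto
      have n: "nat ((x + y) mod int (p^2)) = (nat x + nat y) mod p^2"
        using xy nat_mod_distrib[of "x+y" "int (p^2)"] nat_add_distrib[of x y] by (simp del: of_nat_power)
      have "?h x \<otimes>\<^bsub>unitri_group (p+1)\<^esub> ?h y = fromM (p+1) (JJ ^\<^sub>m nat x * JJ ^\<^sub>m nat y)"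
        unfolding unitri_mult toM_fromM[OF Jpc] ..
      also have "\<dots> = fromM (p+1) (JJ ^\<^sub>m ((nat x + nat y) mod p^2))"
        unfolding pow_mat_add[OF Jc, symmetric] pow_mat_mod[OF Jc J_p2, of "nat x + nat y"] ..
      finally show "?h (x \<otimes>\<^bsub>integer_mod_group (p^2)\<^esub> y) = ?h x \<otimes>\<^bsub>unitri_group (p+1)\<^esub> ?h y"
        unfolding mulG n by simp
    qed
    show "inj_on ?h (carrier (integer_mod_group (p^2)))"
    proof (rule inj_onI)
      fix x y assume x: "x \<in> carrier (integer_mod_group (p^2))" and y: "y \<in> carrier (integer_mod_group (p^2))"
        and e: "?h x = ?h y"
      then have xy: "0 \<le> x" "0 \<le> y" "x < int (p^2)" "y < int (p^2)" using carG by auto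
      have "JJ ^\<^sub>m nat x = JJ ^\<^sub>m nat y" using arg_cong[OF e, of "toM (p+1)"] unfolding toM_fromM[OF Jpc] .
      then have "nat x = nat y" using J_inj[of "nat x" "nat y"] xy by linarith
      then show "x = y" using xy by simp
    qed
  qed
qed

lemma embM: "group_embeds (Mp3 p) (unitri_group (p+1) :: (nat \<Rightarrow> nat \<Rightarrow> 'a) monoid)"
proof -
  have carG: "carrier (Mp3 p) = {0..<p^2} \<times> {0..<p}" by (simp add: Mp3_def)
  have mulG: "\<And>a b c d. (a,b) \<otimes>\<^bsub>Mp3 p\<^esub> (c,d) = ((a + c * (1 + p) ^ b) mod p^2, (b + d) mod p)"
    by (simp add: Mp3_def)
  let ?h = "\<lambda>(a,b). fromM (p+1) (JJ ^\<^sub>m a * YY ^\<^sub>m b)"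
  show ?thesis unfolding group_embeds_def
  proof (intro exI conjI)
    show "?h \<in> hom (Mp3 p) (unitri_group (p+1))"
    proof (rule homI)
      fix x assume "x \<in> carrier (Mp3 p)"
      obtain a b where "x = (a,b)" by (cases x)
      then show "?h x \<in> carrier (unitri_group (p+1))" using JY_carrier[of a b] by simp
    next
      fix x y assume x: "x \<in> carrier (Mp3 p)" and y: "y \<in> carrier (Mp3 p)"
      obtain a b where ab: "x = (a,b)" by (cases x)
      obtain c d where cd: "y = (c,d)" by (cases y)
      have "?h x \<otimes>\<^bsub>unitri_group (p+1)\<^esub> ?h y = fromM (p+1) ((JJ ^\<^sub>m a * YY ^\<^sub>m b) * (JJ ^\<^sub>m c * YY ^\<^sub>m d))"
        unfolding ab cd unitri_mult by (simp only: case_prod_conv toM_fromM[OF JYc])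
      also have "\<dots> = ?h (x \<otimes>\<^bsub>Mp3 p\<^esub> y)"
        unfolding ab cd mulG prodform by simp
      finally show "?h (x \<otimes>\<^bsub>Mp3 p\<^esub> y) = ?h x \<otimes>\<^bsub>unitri_group (p+1)\<^esub> ?h y" by simp
    qed
    show "inj_on ?h (carrier (Mp3 p))"
    proof (rule inj_onI)
      fix x y assume x: "x \<in> carrier (Mp3 p)" and y: "y \<in> carrier (Mp3 p)"
        and e: "?h x = ?h y"
      obtain a b where ab: "x = (a,b)" by (cases x)
      obtain c d where cd: "y = (c,d)" by (cases y)
      have r: "a < p^2" "b < p" "c < p^2" "d < p" using x y carG ab cd by auto
      have E: "JJ ^\<^sub>m a * YY ^\<^sub>m b = JJ ^\<^sub>m c * YY ^\<^sub>m d"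
        using arg_cong[OF e, of "toM (p+1)"] unfolding ab cd by (simp only: case_prod_conv toM_fromM[OF JYc])
      have Ei: "\<And>i j. i < p+1 \<Longrightarrow> j < p+1 \<Longrightarrow>
          (if i \<le> j then of_nat (a choose (j - i)) else 0) + (if i = 0 \<and> j = p - 1 then of_nat b else 0)
        = (if i \<le> j then of_nat (c choose (j - i)) else (0::'a)) + (if i = 0 \<and> j = p - 1 then of_nat d else 0)"
        using E JY_idx by metis
      have Cp: "(of_nat (a choose (p - 1)) :: 'a) = of_nat (c choose (p - 1))"
        using Ei[of 1 p] p3 by simp
      have "JJ ^\<^sub>m a = JJ ^\<^sub>m c"
      proof (rule eq_matI)
        fix i j assume "i < dim_row (JJ ^\<^sub>m c)" "j < dim_col (JJ ^\<^sub>m c)"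
        then have ij: "i < p+1" "j < p+1" by (simp_all split: if_splits)
        show "(JJ ^\<^sub>m a) $$ (i,j) = (JJ ^\<^sub>m c) $$ (i,j)"
        proof (cases "i = 0 \<and> j = p - 1")
          case True then show ?thesis using Cp ij by (simp add: Jpow_idx)
        next
          case False
          then have "(if i = 0 \<and> j = p - 1 then of_nat b else 0) = (0::'a)" "(if i = 0 \<and> j = p - 1 then of_nat d else 0) = (0::'a)" by auto
          then show ?thesis using Ei[OF ij] ij by (simp add: Jpow_idx)
        qed
      qed auto
      then have ac: "a = c" using J_inj r by blast
      have "(of_nat b :: 'a) = of_nat d" using Ei[of 0 "p - 1"] p3 ac by simp
      then have "b = d" using of_nat_inj_lt[OF ch r(2) r(4)] by simp
      then show "x = y" using ab cd ac by simp
    qed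
  qed
qed

end

theorem corollary3p8:
  fixes p :: nat
  assumes "Factorial_Ring.prime p" and "odd p" and "CHAR('a::field) = p"
  shows "group_embeds (integer_mod_group (p^2)) (unitri_group (p + 1) :: (nat \<Rightarrow> nat \<Rightarrow> 'a) monoid)
       \<and> (\<forall>n. group_embeds (integer_mod_group (p^2)) (unitri_group n :: (nat \<Rightarrow> nat \<Rightarrow> 'a) monoid)
              \<longrightarrow> p + 1 \<le> n)
       \<and> group_embeds (Mp3 p) (unitri_group (p + 1) :: (nat \<Rightarrow> nat \<Rightarrow> 'a) monoid)
       \<and> (\<forall>n. group_embeds (Mp3 p) (unitri_group n :: (nat \<Rightarrow> nat \<Rightarrow> 'a) monoid)
              \<longrightarrow> p + 1 \<le> n)"
proof -
  have p3': "p \<ge> 3" using p3[OF assms] .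
  have big: "p + 1 < p^2"
  proof -
    have "p * 2 \<le> p * p" using p3' by (intro mult_left_mono) auto
    then show ?thesis using p3' unfolding power2_eq_square by linarith
  qed
  have pos: "p^2 > 1" using big by simp
  have A: "\<forall>n. group_embeds (integer_mod_group (p^2)) (unitri_group n :: (nat \<Rightarrow> nat \<Rightarrow> 'a) monoid) \<longrightarrow> p + 1 \<le> n"
  proof (intro allI impI)
    fix n assume "group_embeds (integer_mod_group (p^2)) (unitri_group n :: (nat \<Rightarrow> nat \<Rightarrow> 'a) monoid)"
    then obtain h where h: "h \<in> hom (integer_mod_group (p^2)) (unitri_group n :: (nat \<Rightarrow> nat \<Rightarrow> 'a) monoid)"
      "inj_on h (carrier (integer_mod_group (p^2)))" unfolding group_embeds_def by blast
    have p0: "p^2 \<noteq> 0" using pos p3' by simp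
    have carG: "carrier (integer_mod_group (p^2)) = {0..<int (p^2)}" using p0 by (simp add: carrier_integer_mod_group)
    have mulG: "\<And>x y. x \<otimes>\<^bsub>integer_mod_group (p^2)\<^esub> y = (x+y) mod int (p^2)" using p0 by (simp add: integer_mod_group_def)
    define s where "s = (\<lambda>k::nat. int k mod int (p^2))"
    have s1: "s 1 = 1" using pos p3' unfolding s_def by simp
    show "p + 1 \<le> n"
    proof (rule lower_generic[OF h assms(1) assms(3), of s])
      show "\<forall>k. s k \<in> carrier (integer_mod_group (p^2))" using p0 unfolding carG s_def by auto
      show "\<forall>k\<ge>1. s (Suc k) = s k \<otimes>\<^bsub>integer_mod_group (p^2)\<^esub> s 1"
      proof (intro allI impI)
        fix k :: nat
        have "(int k mod int (p^2) + 1) mod int (p^2) = (int k + 1) mod int (p^2)" by (rule mod_add_left_eq)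
        then show "s (Suc k) = s k \<otimes>\<^bsub>integer_mod_group (p^2)\<^esub> s 1"
          unfolding mulG s1 unfolding s_def by (simp add: add.commute)
      qed
      have "s (p+1) = int (p+1)" unfolding s_def using big by (simp del: of_nat_power add: of_nat_power[symmetric])
      then show "s (p+1) \<noteq> s 1" using s1 p3' by simp
    qed
  qed
  have B: "\<forall>n. group_embeds (Mp3 p) (unitri_group n :: (nat \<Rightarrow> nat \<Rightarrow> 'a) monoid) \<longrightarrow> p + 1 \<le> n"
  proof (intro allI impI)
    fix n assume "group_embeds (Mp3 p) (unitri_group n :: (nat \<Rightarrow> nat \<Rightarrow> 'a) monoid)"
    then obtain h where h: "h \<in> hom (Mp3 p) (unitri_group n :: (nat \<Rightarrow> nat \<Rightarrow> 'a) monoid)"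
      "inj_on h (carrier (Mp3 p))" unfolding group_embeds_def by blast
    have carG: "carrier (Mp3 p) = {0..<p^2} \<times> {0..<p}" by (simp add: Mp3_def)
    have mulG: "\<And>a b c d. (a,b) \<otimes>\<^bsub>Mp3 p\<^esub> (c,d) = ((a + c * (1 + p) ^ b) mod p^2, (b + d) mod p)"
      by (simp add: Mp3_def)
    define s where "s = (\<lambda>k::nat. (k mod p^2, 0::nat))"
    have s1: "s 1 = (1,0)" using pos p3' unfolding s_def by simp
    show "p + 1 \<le> n"
    proof (rule lower_generic[OF h assms(1) assms(3), of s])
      show "\<forall>k. s k \<in> carrier (Mp3 p)" using pos p3' unfolding carG s_def by auto
      show "\<forall>k\<ge>1. s (Suc k) = s k \<otimes>\<^bsub>Mp3 p\<^esub> s 1"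
        unfolding s1 unfolding s_def mulG by (simp add: mod_Suc_eq)
      have "s (p+1) = (p+1, 0)" unfolding s_def using big by simp
      then show "s (p+1) \<noteq> s 1" using s1 p3' by simp
    qed
  qed
  show ?thesis using embZ[OF assms] embM[OF assms] A B by blast
qed

end
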